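(* Let $S$ be a linearly dependent set of permutations, each of order larger than one. Then: (a) $S$ is not a singleton; (b) if $|S|=2$, then both permutations in $S$ have order two; (c) if $|S|=3$ and all permutations in $S$ have the same order, then this common order is three.
   Context: A $k$-permutation is a bijection of $[k]=\{1,\dots,k\}$. The gradient polynomial of a $k$-permutation $\pi$ is $P_\pi(\alpha,\beta)=k!\sum_{m\in[k]}\left(\frac{k-m}{1-\alpha}-\frac{m-1}{\alpha}\right)\left(\frac{k-\pi(m)}{1-\beta}-\frac{\pi(m)-1}{\beta}\right)\frac{\alpha^{m-1}(1-\alpha)^{k-m}\beta^{\pi(m)-1}(1-\beta)^{k-\pi(m)}}{(m-1)!(k-m)!(\pi(m)-1)!(k-\pi(m))!}$. A set $S$ of (distinct) permutations is called linearly dependent if the gradient polynomials $P_\pi$, $\pi\in S$, are linearly dependent over $\mathbb{R}$, i.e., there are reals $t_\pi$, not all zero, with $\sum_{\pi\in S}t_\pi P_\pi=0$. *)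

theory Defs
  imports Complex_Main "HOL-Combinatorics.Permutations"
begin

text \<open>A permutation is represented as a pair (k, pi): its order k and a bijection
  pi of {1..k} (identity outside {1..k}, so pi is uniquely determined).\<close>

type_synonym kperm = "nat \<times> (nat \<Rightarrow> nat)"

definition is_kperm :: "kperm \<Rightarrow> bool" where
  "is_kperm p \<longleftrightarrow> snd p permutes {1..fst p}"

definition grad_poly :: "kperm \<Rightarrow> real \<Rightarrow> real \<Rightarrow> real" where
  "grad_poly p \<alpha> \<beta> =
    (let k = fst p; \<pi> = snd p in
     fact k * (\<Sum>m\<in>{1..k}.
        (real (k - m) / (1 - \<alpha>) - real (m - 1) / \<alpha>)
      * (real (k - \<pi> m) / (1 - \<beta>) - real (\<pi> m - 1) / \<beta>)
      * (\<alpha> ^ (m - 1) * (1 - \<alpha>) ^ (k - m) * \<beta> ^ (\<pi> m - 1) * (1 - \<beta>) ^ (k - \<pi> m))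
      / (fact (m - 1) * fact (k - m) * fact (\<pi> m - 1) * fact (k - \<pi> m))))"

text \<open>Since the
  defining expression is a polynomial that is only literally defined for
  0 < alpha, beta < 1, identity of polynomials is tested on the open unit square
  (two polynomials agreeing on a nonempty open set are equal).\<close>

definition lin_dep :: "kperm set \<Rightarrow> bool" where
  "lin_dep S \<longleftrightarrow> (\<exists>t :: kperm \<Rightarrow> real. (\<exists>p\<in>S. t p \<noteq> 0) \<and>
     (\<forall>\<alpha> \<beta>. 0 < \<alpha> \<and> \<alpha> < 1 \<and> 0 < \<beta> \<and> \<beta> < 1 \<longrightarrow>
        (\<Sum>p\<in>S. t p * grad_poly p \<alpha> \<beta>) = 0))"

end

theory Submission
  imports Defs "HOL-Analysis.Poly_Roots" "HOL-Computational_Algebra.Polynomial"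
begin
definition ee :: "nat \<Rightarrow> nat \<Rightarrow> real \<Rightarrow> real" where
  "ee k j a = (if 1 \<le> j \<and> j < k then a^(j-1) * (1-a)^(k-1-j) / (fact (j-1) * fact (k-1-j)) else 0)"

lemma lit1:
  assumes "0 < a" "a < 1" "1 \<le> m" "m \<le> k"
  shows "real (k - m) / (1 - a) * (a ^ (m - 1) * (1 - a) ^ (k - m)) / (fact (m - 1) * fact (k - m))
        = ee k m a"
proof (cases "m < k")
  case True
  then obtain n where n: "k - m = Suc n" by (metis Suc_diff_Suc)
  have n2: "k - 1 - m = n" using n by simp
  have ne: "1 - a \<noteq> 0" using assms by simp
  have "ee k m a = a ^ (m - 1) * (1 - a) ^ n / (fact (m - 1) * fact n)"
    using True assms n2 by (simp add: ee_def)
  moreover have "real (Suc n) / (1 - a) * (a ^ (m - 1) * (1 - a) ^ (Suc n)) / (fact (m - 1) * fact (Suc n))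
     = a ^ (m - 1) * (1 - a) ^ n / (fact (m - 1) * fact n)"
    using ne by (simp add: fact_Suc power_Suc field_simps del: of_nat_Suc)
  ultimately show ?thesis unfolding n by simp
next
  case False
  then show ?thesis using assms by (simp add: ee_def)
qed

lemma lit2:
  assumes "0 < a" "a < 1" "1 \<le> m" "m \<le> k"
  shows "real (m - 1) / a * (a ^ (m - 1) * (1 - a) ^ (k - m)) / (fact (m - 1) * fact (k - m))
        = ee k (m - 1) a"
proof (cases "2 \<le> m")
  case True
  then obtain n where n: "m - 1 = Suc n" by (metis Suc_diff_Suc Suc_1 Suc_le_lessD)
  have n2: "k - 1 - (m - 1) = k - m" using n assms by auto
  have ne: "a \<noteq> 0" using assms by simp
  have mm: "m = Suc (Suc n)" using n assms by arith
  have "ee k (m - 1) a = a ^ n * (1 - a) ^ (k - m) / (fact n * fact (k - m))"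
    using assms unfolding mm by (simp add: ee_def)
  moreover have "real (Suc n) / a * (a ^ (Suc n) * (1 - a) ^ (k - m)) / (fact (Suc n) * fact (k - m))
     = a ^ n * (1 - a) ^ (k - m) / (fact n * fact (k - m))"
    using ne by (simp add: fact_Suc power_Suc field_simps del: of_nat_Suc)
  ultimately show ?thesis unfolding n by simp
next
  case False
  then have "m = 1" using assms by auto
  then show ?thesis by (simp add: ee_def)
qed
definition DD :: "nat \<Rightarrow> nat \<Rightarrow> real \<Rightarrow> real" where
  "DD k m a = ee k m a - ee k (m-1) a"

lemma lit:
  assumes "0 < a" "a < 1" "1 \<le> m" "m \<le> k"
  shows "(real (k - m) / (1 - a) - real (m - 1) / a) * (a ^ (m - 1) * (1 - a) ^ (k - m)) / (fact (m - 1) * fact (k - m))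
        = DD k m a"
  using lit1[OF assms] lit2[OF assms] unfolding DD_def
  by (simp add: left_diff_distrib diff_divide_distrib)

lemma regroup: "(A::real) * B * (x * y * u * v) / (f1 * f2 * f3 * f4) = (A * (x * y) / (f1 * f2)) * (B * (u * v) / (f3 * f4))"
  by (simp add: mult_ac)

lemma term_eq:
  assumes "\<pi> permutes {1..k}" "0 < a" "a < 1" "0 < b" "b < 1" "m \<in> {1..k}"
  shows "(real (k - m) / (1 - a) - real (m - 1) / a)
      * (real (k - \<pi> m) / (1 - b) - real (\<pi> m - 1) / b)
      * (a ^ (m - 1) * (1 - a) ^ (k - m) * b ^ (\<pi> m - 1) * (1 - b) ^ (k - \<pi> m))
      / (fact (m - 1) * fact (k - m) * fact (\<pi> m - 1) * fact (k - \<pi> m))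
     = DD k m a * DD k (\<pi> m) b"
proof -
  have pm: "\<pi> m \<in> {1..k}" using assms(6) by (subst permutes_in_image[OF assms(1)])
  have l1: "(real (k - m) / (1 - a) - real (m - 1) / a) * (a ^ (m - 1) * (1 - a) ^ (k - m)) / (fact (m - 1) * fact (k - m)) = DD k m a"
    using assms by (intro lit) auto
  have l2: "(real (k - \<pi> m) / (1 - b) - real (\<pi> m - 1) / b) * (b ^ (\<pi> m - 1) * (1 - b) ^ (k - \<pi> m)) / (fact (\<pi> m - 1) * fact (k - \<pi> m)) = DD k (\<pi> m) b"
    using assms pm by (intro lit) auto
  show ?thesis
    unfolding regroup l1 l2 by (rule refl)
qed

lemma grad_rep:
  assumes "\<pi> permutes {1..k}" "0 < a" "a < 1" "0 < b" "b < 1"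
  shows "grad_poly (k, \<pi>) a b = fact k * (\<Sum>m\<in>{1..k}. DD k m a * DD k (\<pi> m) b)"
  unfolding grad_poly_def Let_def fst_conv snd_conv
  using term_eq[OF assms] by (intro arg_cong[where f="\<lambda>x. fact k * x"] sum.cong) auto


lemma ee_subst:
  assumes "0 < s" "k = Suc (Suc n)" "i \<le> n"
  shows "ee k (Suc i) (s / (1 + s)) = s ^ i / (1 + s) ^ n / (fact i * fact (n - i))"
proof -
  have e: "1 - s / (1 + s) = 1 / (1 + s)" using assms by (simp add: field_simps)
  have "(s / (1 + s)) ^ i * (1 / (1 + s)) ^ (n - i) = s ^ i / (1 + s) ^ (i + (n - i))"
    by (simp add: power_divide power_add field_simps)
  also have "i + (n - i) = n" using assms by simp
  finally have h: "(s / (1 + s)) ^ i * (1 / (1 + s)) ^ (n - i) = s ^ i / (1 + s) ^ n" .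
  show ?thesis using assms unfolding ee_def e by (simp add: h)
qed

lemma ee_indep:
  assumes h: "\<forall>a. 0 < a \<and> a < 1 \<longrightarrow> (\<Sum>j\<in>{1..<k}. c j * ee k j a) = 0"
    and j: "j \<in> {1..<k}"
  shows "c j = 0"
proof -
  obtain n where k: "k = Suc (Suc n)" using j by (intro that[of "k - 2"]) auto
  define w where "w i = c (Suc i) / (fact i * fact (n - i))" for i
  have ws: "(\<Sum>i\<le>n. w i * s ^ i) = 0" if s: "0 < s" for s :: real
  proof -
    define a where "a = s / (1 + s)"
    have a: "0 < a" "a < 1" using s by (auto simp: a_def field_simps)
    have "(\<Sum>j\<in>{1..<k}. c j * ee k j a) = (\<Sum>i\<in>{0..<Suc n}. c (Suc i) * ee k (Suc i) a)"
      by (simp only: k One_nat_def sum.shift_bounds_Suc_ivl)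
    also have "\<dots> = (\<Sum>i\<le>n. w i * s ^ i) / (1 + s) ^ n"
      unfolding sum_divide_distrib atLeast0LessThan lessThan_Suc_atMost
      by (intro sum.cong refl) (simp add: a_def ee_subst[OF s k] w_def)
    finally have "(\<Sum>i\<le>n. w i * s ^ i) / (1 + s) ^ n = 0" using h a by simp
    moreover have "1 + s \<noteq> 0" using s by simp
    ultimately show ?thesis by simp
  qed
  have "{0<..} \<subseteq> {z. (\<Sum>i\<le>n. w i * z ^ i) = 0}" using ws by auto
  then have "\<not> finite {z. (\<Sum>i\<le>n. w i * z ^ i) = (0::real)}"
    using infinite_Ioi finite_subset by blast
  then have "\<forall>i\<le>n. w i = 0" using polyfun_finite_roots[of w n] by auto
  moreover have "j - 1 \<le> n" using j k by auto
  ultimately have "w (j - 1) = 0" by blast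
  moreover have "Suc (j - 1) = j" using j by auto
  ultimately show ?thesis unfolding w_def by simp
qed

lemma DD_tele:
  "(\<Sum>m\<in>{1..k}. x m * DD k m a) = (\<Sum>j\<in>{1..<k}. (x j - x (Suc j)) * ee k j a)"
proof (cases k)
  case 0
  then show ?thesis by simp
next
  case (Suc n)
  have A: "(\<Sum>m\<in>{1..k}. x m * ee k m a) = (\<Sum>m\<in>{1..<k}. x m * ee k m a)"
  proof -
    have "{1..k} = insert k {1..<k}" using Suc by auto
    then show ?thesis by (simp add: ee_def)
  qed
  have B: "(\<Sum>m\<in>{1..k}. x m * ee k (m - 1) a) = (\<Sum>j\<in>{1..<k}. x (Suc j) * ee k j a)"
  proof -
    have "(\<Sum>m\<in>{1..k}. x m * ee k (m - 1) a) = (\<Sum>m\<in>{Suc 0..<Suc k}. x m * ee k (m - 1) a)"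
      by (simp add: atLeastLessThanSuc_atLeastAtMost)
    also have "\<dots> = (\<Sum>j\<in>{0..<k}. x (Suc j) * ee k j a)"
      by (subst sum.shift_bounds_Suc_ivl) simp
    also have "\<dots> = x 1 * ee k 0 a + (\<Sum>j\<in>{Suc 0..<k}. x (Suc j) * ee k j a)"
      using Suc by (subst sum.atLeast_Suc_lessThan) auto
    finally show ?thesis by (simp add: ee_def)
  qed
  show ?thesis unfolding DD_def right_diff_distrib sum_subtractf A B left_diff_distrib by simp
qed

lemma DD_indep:
  assumes h: "\<forall>a. 0 < a \<and> a < 1 \<longrightarrow> (\<Sum>m\<in>{1..k}. x m * DD k m a) = 0"
    and m: "m \<in> {1..k}"
  shows "x m = x 1"
proof -
  have st: "x j = x (Suc j)" if "j \<in> {1..<k}" for j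
  proof -
    have "x j - x (Suc j) = 0"
      using ee_indep[where k=k and c="\<lambda>j. x j - x (Suc j)" and j=j] h that unfolding DD_tele by blast
    then show ?thesis by simp
  qed
  have "1 \<le> m" "m \<le> k" using m by auto
  then show ?thesis
  proof (induction m rule: dec_induct)
    case base
    then show ?case by simp
  next
    case (step n)
    then show ?case using st[of n] by simp
  qed
qed

lemma DD_indep_perm:
  assumes s: "\<sigma> permutes {1..k}"
    and h: "\<forall>a. 0 < a \<and> a < 1 \<longrightarrow> (\<Sum>m\<in>{1..k}. x m * DD k (\<sigma> m) a) = 0"
    and m: "m \<in> {1..k}" and m': "m' \<in> {1..k}"
  shows "x m = x m'"
proof -
  define y where "y j = x (inv \<sigma> j)" for j
  have e: "(\<Sum>m\<in>{1..k}. x m * DD k (\<sigma> m) a) = (\<Sum>j\<in>{1..k}. y j * DD k j a)" for a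
  proof -
    have "(\<Sum>j\<in>{1..k}. y j * DD k j a) = (\<Sum>m\<in>{1..k}. y (\<sigma> m) * DD k (\<sigma> m) a)"
      using sum.reindex_bij_betw[OF permutes_imp_bij[OF s], of "\<lambda>j. y j * DD k j a"] by simp
    also have "\<dots> = (\<Sum>m\<in>{1..k}. x m * DD k (\<sigma> m) a)"
      unfolding y_def using permutes_inverses(2)[OF s] by simp
    finally show ?thesis by simp
  qed
  have y: "y j = y 1" if "j \<in> {1..k}" for j
    using DD_indep[where k=k and x=y and m=j] h that unfolding e by blast
  have "x m = y (\<sigma> m)" "x m' = y (\<sigma> m')" unfolding y_def using permutes_inverses(2)[OF s] by auto
  moreover have "\<sigma> m \<in> {1..k}" "\<sigma> m' \<in> {1..k}"
    using m m' by (subst permutes_in_image[OF s], simp)+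
  ultimately show ?thesis using y by metis
qed


definition XX :: "kperm set \<Rightarrow> (kperm \<Rightarrow> real) \<Rightarrow> nat \<Rightarrow> nat \<Rightarrow> real" where
  "XX S t m j = (\<Sum>p\<in>S. t p * (if snd p m = j then 1 else 0))"

lemma sum_ind:
  assumes "finite A" "i \<in> A"
  shows "(\<Sum>j\<in>A. (if i = j then (1::real) else 0) * f j) = f i"
proof -
  have "(\<Sum>j\<in>A. (if i = j then (1::real) else 0) * f j) = (\<Sum>j\<in>A. (if i = j then f j else 0))"
    by (intro sum.cong) auto
  also have "\<dots> = f i" using assms by (simp add: sum.delta)
  finally show ?thesis .
qed

lemma XX_DD:
  assumes fin: "finite S" and perm: "\<forall>p\<in>S. snd p permutes {1..k}" and m: "m \<in> {1..k}"
  shows "(\<Sum>j\<in>{1..k}. XX S t m j * f j) = (\<Sum>p\<in>S. t p * f (snd p m))"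
proof -
  have "(\<Sum>j\<in>{1..k}. XX S t m j * f j) = (\<Sum>j\<in>{1..k}. \<Sum>p\<in>S. t p * ((if snd p m = j then 1 else 0) * f j))"
    unfolding XX_def sum_distrib_right by (simp add: mult_ac)
  also have "\<dots> = (\<Sum>p\<in>S. \<Sum>j\<in>{1..k}. t p * ((if snd p m = j then 1 else 0) * f j))"
    by (rule sum.swap)
  also have "\<dots> = (\<Sum>p\<in>S. t p * f (snd p m))"
  proof (intro sum.cong refl)
    fix p assume p: "p \<in> S"
    have "snd p m \<in> {1..k}" using m perm p by (subst permutes_in_image) auto
    then show "(\<Sum>j\<in>{1..k}. t p * ((if snd p m = j then 1 else 0) * f j)) = t p * f (snd p m)"
      unfolding sum_distrib_left[symmetric] using sum_ind[of "{1..k}" "snd p m" f] by simp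
  qed
  finally show ?thesis .
qed

lemma XX_col:
  assumes fin: "finite S" and perm: "\<forall>p\<in>S. snd p permutes {1..k}" and j: "j \<in> {1..k}"
  shows "(\<Sum>m\<in>{1..k}. XX S t m j) = (\<Sum>p\<in>S. t p)"
proof -
  have "(\<Sum>m\<in>{1..k}. XX S t m j) = (\<Sum>p\<in>S. \<Sum>m\<in>{1..k}. t p * (if snd p m = j then 1 else 0))"
    unfolding XX_def by (rule sum.swap)
  also have "\<dots> = (\<Sum>p\<in>S. t p)"
  proof (intro sum.cong refl)
    fix p assume p: "p \<in> S"
    have sp: "snd p permutes {1..k}" using perm p by auto
    have ij: "inv (snd p) j \<in> {1..k}" using j permutes_in_image[OF permutes_inv[OF sp]] by auto
    have "(\<Sum>m\<in>{1..k}. t p * (if snd p m = j then 1 else 0)) = (\<Sum>m\<in>{1..k}. (if inv (snd p) j = m then 1 else 0) * t p)"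
      using permutes_inv_eq[OF sp] by (intro sum.cong) auto
    also have "\<dots> = t p" using sum_ind[of "{1..k}" "inv (snd p) j" "\<lambda>_. t p"] ij by simp
    finally show "(\<Sum>m\<in>{1..k}. t p * (if snd p m = j then 1 else 0)) = t p" .
  qed
  finally show ?thesis .
qed

lemma core_rows:
  assumes fin: "finite S" and perm: "\<forall>p\<in>S. snd p permutes {1..k} \<and> fst p = k"
    and zero: "\<forall>a b. 0 < a \<and> a < 1 \<and> 0 < b \<and> b < 1 \<longrightarrow> (\<Sum>p\<in>S. t p * grad_poly p a b) = 0"
    and m: "m \<in> {1..k}" and j: "j \<in> {1..k}"
  shows "XX S t m j - XX S t 1 j = XX S t m 1 - XX S t 1 1"
proof -
  have perm': "\<forall>p\<in>S. snd p permutes {1..k}" using perm by auto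
  define w where "w b m = (\<Sum>p\<in>S. t p * DD k (snd p m) b)" for b m
  have gp: "grad_poly p a b = fact k * (\<Sum>m\<in>{1..k}. DD k m a * DD k (snd p m) b)"
    if "p \<in> S" "0 < a" "a < 1" "0 < b" "b < 1" for p a b
  proof -
    have "p = (k, snd p)" using perm that(1) by (metis prod.collapse)
    then have "grad_poly p a b = grad_poly (k, snd p) a b" by simp
    also have "\<dots> = fact k * (\<Sum>m\<in>{1..k}. DD k m a * DD k (snd p m) b)"
      using grad_rep[of "snd p" k a b] perm that by auto
    finally show ?thesis .
  qed
  have W: "w b m' = w b 1" if b: "0 < b" "b < 1" and m': "m' \<in> {1..k}" for b m'
  proof -
    have "\<forall>a. 0 < a \<and> a < 1 \<longrightarrow> (\<Sum>m\<in>{1..k}. (fact k * w b m) * DD k m a) = 0"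
    proof (intro allI impI)
      fix a :: real assume a: "0 < a \<and> a < 1"
      have "(\<Sum>m\<in>{1..k}. (fact k * w b m) * DD k m a) = (\<Sum>m\<in>{1..k}. \<Sum>p\<in>S. t p * (fact k * (DD k m a * DD k (snd p m) b)))"
        unfolding w_def sum_distrib_left sum_distrib_right by (simp add: mult_ac)
      also have "\<dots> = (\<Sum>p\<in>S. \<Sum>m\<in>{1..k}. t p * (fact k * (DD k m a * DD k (snd p m) b)))"
        by (rule sum.swap)
      also have "\<dots> = (\<Sum>p\<in>S. t p * grad_poly p a b)"
        using gp a b by (intro sum.cong refl) (simp add: sum_distrib_left)
      also have "\<dots> = 0" using zero a b by blast
      finally show "(\<Sum>m\<in>{1..k}. (fact k * w b m) * DD k m a) = 0" .
    qed
    from DD_indep[OF this m'] show ?thesis by simp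
  qed
  have "\<forall>b. 0 < b \<and> b < 1 \<longrightarrow> (\<Sum>j\<in>{1..k}. (XX S t m j - XX S t 1 j) * DD k j b) = 0"
  proof (intro allI impI)
    fix b :: real assume b: "0 < b \<and> b < 1"
    have "(\<Sum>j\<in>{1..k}. (XX S t m j - XX S t 1 j) * DD k j b)
        = (\<Sum>j\<in>{1..k}. XX S t m j * DD k j b) - (\<Sum>j\<in>{1..k}. XX S t 1 j * DD k j b)"
      by (simp add: left_diff_distrib sum_subtractf)
    also have "\<dots> = w b m - w b 1"
      unfolding w_def using XX_DD[OF fin perm' m] XX_DD[OF fin perm', of 1] m by simp
    also have "\<dots> = 0" using W[of b m] b m by simp
    finally show "(\<Sum>j\<in>{1..k}. (XX S t m j - XX S t 1 j) * DD k j b) = 0" .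
  qed
  from DD_indep[OF this j] show ?thesis .
qed


lemma XX_zero:
  assumes fin: "finite S" and perm: "\<forall>p\<in>S. snd p permutes {1..k}"
    and card: "card S < k"
    and rd: "\<forall>m\<in>{1..k}. \<forall>j\<in>{1..k}. XX S t m j - XX S t 1 j = XX S t m 1 - XX S t 1 1"
    and m: "m \<in> {1..k}" and j: "j \<in> {1..k}"
  shows "XX S t m j = 0"
proof -
  define T where "T = (\<Sum>p\<in>S. t p)"
  have k1: "1 \<in> {1..k}" using card by auto
  have row: "(\<Sum>j\<in>{1..k}. XX S t m' j) = T" if "m' \<in> {1..k}" for m'
    using XX_DD[OF fin perm that, of t "\<lambda>_. 1"] unfolding T_def by simp
  have same: "XX S t m' j' = XX S t 1 j'" if m': "m' \<in> {1..k}" and j': "j' \<in> {1..k}" for m' j'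
  proof -
    define c where "c = XX S t m' 1 - XX S t 1 1"
    have cc: "XX S t m' j = XX S t 1 j + c" if "j \<in> {1..k}" for j
      using rd[rule_format, OF m' that] unfolding c_def by simp
    then have "(\<Sum>j\<in>{1..k}. XX S t m' j) = (\<Sum>j\<in>{1..k}. XX S t 1 j + c)" by (intro sum.cong) auto
    also have "\<dots> = (\<Sum>j\<in>{1..k}. XX S t 1 j) + real k * c" by (simp add: sum.distrib)
    finally have "real k * c = 0" using row[OF m'] row[OF k1] by simp
    then have "c = 0" using card by simp
    then show ?thesis using cc[OF j'] by simp
  qed
  have col: "real k * XX S t 1 j' = T" if j': "j' \<in> {1..k}" for j'
  proof -
    have "T = (\<Sum>m\<in>{1..k}. XX S t m j')" using XX_col[OF fin perm j'] unfolding T_def by simp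
    also have "\<dots> = (\<Sum>m\<in>{1..k}. XX S t 1 j')" by (rule sum.cong[OF refl], rule same[OF _ j']) simp
    finally show ?thesis by simp
  qed
  have "\<not> {1..k} \<subseteq> (\<lambda>p. snd p 1) ` S"
  proof
    assume "{1..k} \<subseteq> (\<lambda>p. snd p 1) ` S"
    then have "card {1..k} \<le> card ((\<lambda>p. snd p 1) ` S)" using fin by (intro card_mono) auto
    also have "\<dots> \<le> card S" using fin by (rule card_image_le)
    finally show False using card by simp
  qed
  then obtain j0 where j0: "j0 \<in> {1..k}" "j0 \<notin> (\<lambda>p. snd p 1) ` S" by blast
  have "XX S t 1 j0 = 0" unfolding XX_def using j0 by (intro sum.neutral) auto
  then have "T = 0" using col[OF j0(1)] by simp
  then have "XX S t 1 j = 0" using col[OF j] card by simp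
  then show ?thesis using same[OF m j] by simp
qed

lemma perm_diff:
  assumes "p \<noteq> q" "snd p permutes {1..k}" "snd q permutes {1..k}" "fst p = fst q"
  obtains i where "i \<in> {1..k}" "snd p i \<noteq> snd q i"
proof -
  have "snd p \<noteq> snd q" using assms(1,4) prod_eqI by blast
  then obtain i where i: "snd p i \<noteq> snd q i" by blast
  have "i \<in> {1..k}"
  proof (rule ccontr)
    assume "i \<notin> {1..k}"
    then have "snd p i = i" "snd q i = i" using assms(2,3) permutes_not_in by fastforce+
    then show False using i by simp
  qed
  then show ?thesis using that i by blast
qed

lemma three:
  assumes d: "p \<noteq> q" "q \<noteq> r" "p \<noteq> r"
    and perm: "\<forall>x\<in>{p,q,r}. snd x permutes {1..k} \<and> fst x = k"
    and X: "\<forall>m\<in>{1..k}. \<forall>j\<in>{1..k}. XX {p,q,r} t m j = 0"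
  shows "t p = 0"
proof (rule ccontr)
  assume tp: "t p \<noteq> 0"
  have Xe: "t p * (if snd p m = j then 1 else 0) + t q * (if snd q m = j then 1 else 0) + t r * (if snd r m = j then 1 else 0) = 0"
    if "m \<in> {1..k}" "j \<in> {1..k}" for m j
    using X that d unfolding XX_def by (simp add: add.assoc)
  have inr: "snd x m \<in> {1..k}" if "x \<in> {p,q,r}" "m \<in> {1..k}" for x m
    using perm that by (subst permutes_in_image) auto
  obtain i where i: "i \<in> {1..k}" "snd p i \<noteq> snd q i"
    using perm_diff[of p q k] d perm by auto
  obtain i' where i': "i' \<in> {1..k}" "snd p i' \<noteq> snd r i'"
    using perm_diff[of p r k] d perm by auto
  have e1: "t p + t r * (if snd r i = snd p i then 1 else 0) = 0"
    using Xe[OF i(1) inr[OF _ i(1), of p]] i by simp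
  then have ri: "snd r i = snd p i" and tr: "t r = - t p" using tp by (auto split: if_splits)
  have e2: "t p + t q * (if snd q i' = snd p i' then 1 else 0) = 0"
    using Xe[OF i'(1) inr[OF _ i'(1), of p]] i' by simp
  then have tq: "t q = - t p" using tp by (auto split: if_splits)
  have "t q = 0"
    using Xe[OF i(1) inr[OF _ i(1), of q]] i ri by simp
  then show False using tq tp by simp
qed

lemma small_indep:
  assumes fin: "finite S" and c3: "card S \<le> 3"
    and perm: "\<forall>p\<in>S. snd p permutes {1..k} \<and> fst p = k"
    and X: "\<forall>m\<in>{1..k}. \<forall>j\<in>{1..k}. XX S t m j = 0"
    and p: "p \<in> S" and k: "1 \<le> k"
  shows "t p = 0"
proof -
  have "card S = 1 \<or> card S = 2 \<or> card S = 3" using c3 p fin card_0_eq[OF fin] by fastforce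
  then show ?thesis
  proof (elim disjE)
    assume "card S = 1"
    then obtain x where S: "S = {x}" using card_1_singletonE by blast
    have "snd x 1 \<in> {1..k}" using perm S k by (subst permutes_in_image) auto
    then have "XX S t 1 (snd x 1) = 0" using X k by auto
    then show ?thesis using S p unfolding XX_def by simp
  next
    assume "card S = 2"
    then obtain x y where S: "S = {x, y}" and xy: "x \<noteq> y" by (auto simp: card_2_iff)
    obtain i where i: "i \<in> {1..k}" "snd x i \<noteq> snd y i"
      using perm_diff[of x y k] xy perm S by auto
    have "snd x i \<in> {1..k}" "snd y i \<in> {1..k}" using perm S i by (subst permutes_in_image; auto)+
    then have "XX S t i (snd x i) = 0" "XX S t i (snd y i) = 0" using X i by auto
    then have "t x = 0" "t y = 0" using S xy i unfolding XX_def by auto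
    then show ?thesis using S p by auto
  next
    assume "card S = 3"
    then obtain x y z where S: "S = {x, y, z}" and d: "x \<noteq> y" "y \<noteq> z" "x \<noteq> z"
      by (auto simp: card_3_iff)
    have "t x = 0" using three[of x y z k t] d perm X S by auto
    moreover have "t y = 0" using three[of y x z k t] d perm X S by (auto simp: insert_commute)
    moreover have "t z = 0" using three[of z x y k t] d perm X S by (auto simp: insert_commute)
    ultimately show ?thesis using S p by auto
  qed
qed

lemma same_order:
  assumes fin: "finite S" and perm: "\<forall>p\<in>S. snd p permutes {1..k} \<and> fst p = k"
    and card: "card S < k" "card S \<le> 3"
    and zero: "\<forall>a b. 0 < a \<and> a < 1 \<and> 0 < b \<and> b < 1 \<longrightarrow> (\<Sum>p\<in>S. t p * grad_poly p a b) = 0"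
    and p: "p \<in> S"
  shows "t p = 0"
proof -
  have perm': "\<forall>p\<in>S. snd p permutes {1..k}" using perm by auto
  have rd: "\<forall>m\<in>{1..k}. \<forall>j\<in>{1..k}. XX S t m j - XX S t 1 j = XX S t m 1 - XX S t 1 1"
    using core_rows[OF fin perm zero] by blast
  have "\<forall>m\<in>{1..k}. \<forall>j\<in>{1..k}. XX S t m j = 0"
    using XX_zero[OF fin perm' card(1) rd] by blast
  then show ?thesis using small_indep[OF fin card(2) perm _ p] card by auto
qed


definition Ep :: "nat \<Rightarrow> nat \<Rightarrow> real poly" where
  "Ep k j = (if 1 \<le> j \<and> j < k then smult (1 / (fact (j-1) * fact (k-1-j))) (monom 1 (j-1) * [:1, -1:] ^ (k-1-j)) else 0)"

definition DP :: "nat \<Rightarrow> nat \<Rightarrow> real poly" where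
  "DP k m = Ep k m - Ep k (m - 1)"

lemma poly_Ep: "poly (Ep k j) a = ee k j a"
  by (simp add: Ep_def ee_def poly_monom)

lemma poly_DP: "poly (DP k m) a = DD k m a"
  by (simp add: DP_def DD_def poly_Ep)

lemma degree_Ep: "degree (Ep k j) \<le> k - 2"
proof (cases "1 \<le> j \<and> j < k")
  case True
  have "degree (monom (1::real) (j-1) * [:1, -1:] ^ (k-1-j)) \<le> (j - 1) + (k - 1 - j) * 1"
    by (rule order.trans[OF degree_mult_le], rule add_mono[OF degree_monom_le], rule order.trans[OF degree_power_le]) simp
  also have "\<dots> = k - 2" using True by simp
  finally have d: "degree (monom (1::real) (j-1) * [:1, -1:] ^ (k-1-j)) \<le> k - 2" .
  have "Ep k j = smult (1 / (fact (j-1) * fact (k-1-j))) (monom 1 (j-1) * [:1, -1:] ^ (k-1-j))"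
    using True by (simp add: Ep_def)
  then have "degree (Ep k j) \<le> degree (monom (1::real) (j-1) * [:1, -1:] ^ (k-1-j))"
    by (simp only: degree_smult_le)
  then show ?thesis using d by linarith
next
  case False
  then have "Ep k j = 0" unfolding Ep_def by auto
  then show ?thesis by simp
qed

lemma coeff_lin_pow: "coeff ([:1, -1:] ^ n) n = ((-1)::real) ^ n"
proof -
  have d: "degree ([:1, -1:] ^ n :: real poly) = n" by (subst degree_power_eq) auto
  have "coeff ([:1, -1:] ^ n :: real poly) n = lead_coeff ([:1, -1:] ^ n :: real poly)" using d by simp
  also have "\<dots> = (-1) ^ n" by (simp add: lead_coeff_power)
  finally show ?thesis .
qed

lemma coeff_Ep_top:
  assumes "1 \<le> j" "j < l"
  shows "coeff (Ep l j) (l - 2) = (-1) ^ (l - 1 - j) / (fact (j - 1) * fact (l - 1 - j))"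
proof -
  have e: "l - 2 - (j - 1) = l - 1 - j" using assms by simp
  have "\<not> l - 2 < j - 1" using assms by simp
  then show ?thesis using assms by (simp add: Ep_def coeff_monom_mult e coeff_lin_pow)
qed

lemma diff_order:
  assumes pp: "snd p permutes {1..k}" "fst p = k" and qq: "snd q permutes {1..l}" "fst q = l"
    and k2: "2 \<le> k" and kl: "k < l"
    and zero: "\<forall>a b. 0 < a \<and> a < 1 \<and> 0 < b \<and> b < 1 \<longrightarrow> (\<Sum>x\<in>{p,q}. t x * grad_poly x a b) = 0"
  shows "t q = 0"
proof (rule ccontr)
  assume tq: "t q \<noteq> 0"
  have pq: "p \<noteq> q" using pp qq kl by auto
  have ep: "p = (k, snd p)" using pp by (metis prod.collapse)
  have eq: "q = (l, snd q)" using qq by (metis prod.collapse)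
  define xx where "xx m = coeff (DP l m) (l - 2)" for m
  have key: "(\<Sum>m\<in>{1..l}. xx m * DD l (snd q m) b) = 0" if b: "0 < b" "b < 1" for b
  proof -
    define Q where "Q = smult (t p * fact k) (\<Sum>m\<in>{1..k}. smult (DD k (snd p m) b) (DP k m))
       + smult (t q * fact l) (\<Sum>m\<in>{1..l}. smult (DD l (snd q m) b) (DP l m))"
    have pQ: "poly Q a = 0" if a: "0 < a" "a < 1" for a
    proof -
      have "poly Q a = t p * grad_poly (k, snd p) a b + t q * grad_poly (l, snd q) a b"
        unfolding Q_def grad_rep[OF pp(1) a b] grad_rep[OF qq(1) a b]
        by (simp add: poly_sum poly_DP sum_distrib_left mult_ac)
      also have "\<dots> = (\<Sum>x\<in>{p,q}. t x * grad_poly x a b)" using pq ep eq by simp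
      also have "\<dots> = 0" using zero a b by blast
      finally show ?thesis .
    qed
    have Q0: "Q = 0"
    proof (rule ccontr)
      assume "Q \<noteq> 0"
      then have "finite {x. poly Q x = 0}" by (rule poly_roots_finite)
      moreover have "{0<..<(1::real)} \<subseteq> {x. poly Q x = 0}" using pQ by auto
      moreover have "infinite {0<..<(1::real)}" by simp
      ultimately show False using finite_subset by blast
    qed
    have c0: "coeff (DP k m) (l - 2) = 0" for m
    proof -
      have "degree (Ep k m) < l - 2" "degree (Ep k (m - 1)) < l - 2"
        using degree_Ep[of k m] degree_Ep[of k "m - 1"] k2 kl by linarith+
      then show ?thesis by (simp add: DP_def coeff_eq_0)
    qed
    have "0 = coeff Q (l - 2)" using Q0 by simp
    also have "\<dots> = t q * fact l * (\<Sum>m\<in>{1..l}. xx m * DD l (snd q m) b)"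
      unfolding Q_def xx_def by (simp add: coeff_sum c0 mult_ac)
    finally show ?thesis using tq by simp
  qed
  have "xx 1 = xx 2"
    using DD_indep_perm[OF qq(1), of xx 1 2] key kl k2 by auto
  moreover obtain n where n: "l = Suc (Suc (Suc n))" using k2 kl by (intro that[of "l - 3"]) auto
  ultimately have "coeff (Ep l 1) (l - 2) - coeff (Ep l 0) (l - 2) = coeff (Ep l 2) (l - 2) - coeff (Ep l 1) (l - 2)"
    unfolding xx_def DP_def by simp
  moreover have "coeff (Ep l 1) (l - 2) = (-1) ^ Suc n / fact (Suc n)"
    using coeff_Ep_top[of 1 l] n by simp
  moreover have "coeff (Ep l 2) (l - 2) = (-1) ^ n / fact n"
    using coeff_Ep_top[of 2 l] n by (simp add: numeral_2_eq_2)
  moreover have "coeff (Ep l 0) (l - 2) = 0" by (simp add: Ep_def)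
  ultimately have h: "(-1) ^ Suc n / fact (Suc n) = (-1) ^ n / fact n - ((-1::real) ^ Suc n / fact (Suc n))"
    by simp
  have pos: "0 < 1/(fact n::real)" "0 < 1/(fact (Suc n)::real)" by simp_all
  consider "(-1::real)^n = 1" | "(-1::real)^n = -1" by (metis neg_one_even_power neg_one_odd_power)
  then show False
  proof cases
    case 1
    then have "- (1/fact (Suc n)) = 1/fact n + 1/(fact (Suc n)::real)" using h by simp
    then show False using pos by linarith
  next
    case 2
    then have "1/fact (Suc n) = - (1/fact n) - 1/(fact (Suc n)::real)" using h by simp
    then show False using pos by linarith
  qed
qed


lemma pair_diff:
  assumes px: "snd x permutes {1..fst x}" and py: "snd y permutes {1..fst y}"
    and k2: "2 \<le> fst x" and lt: "fst x < fst y"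
    and zero: "\<forall>a b. 0 < a \<and> a < 1 \<and> 0 < b \<and> b < 1 \<longrightarrow> (\<Sum>p\<in>{x,y}. t p * grad_poly p a b) = 0"
  shows "t x = 0 \<and> t y = 0"
proof -
  have ty: "t y = 0" using diff_order[OF px refl py refl k2 lt zero] .
  have xy: "x \<noteq> y" using lt by auto
  have z1: "\<forall>a b. 0 < a \<and> a < 1 \<and> 0 < b \<and> b < 1 \<longrightarrow> (\<Sum>p\<in>{x}. t p * grad_poly p a b) = 0"
    using zero ty xy by simp
  have "t x = 0" using same_order[of "{x}" "fst x" t x] px z1 k2 by auto
  then show ?thesis using ty by simp
qed

theorem lemma12:
  fixes S :: "kperm set"
  assumes "finite S"
    and "\<forall>p\<in>S. is_kperm p"
    and "\<forall>p\<in>S. fst p > 1"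
    and "lin_dep S"
  shows "card S \<noteq> 1
    \<and> (card S = 2 \<longrightarrow> (\<forall>p\<in>S. fst p = 2))
    \<and> (card S = 3 \<and> (\<exists>k. \<forall>p\<in>S. fst p = k) \<longrightarrow> (\<forall>p\<in>S. fst p = 3))"
proof -
  obtain t where tt: "\<exists>p\<in>S. t p \<noteq> 0"
    and zero: "\<forall>a b. 0 < a \<and> a < 1 \<and> 0 < b \<and> b < 1 \<longrightarrow> (\<Sum>p\<in>S. t p * grad_poly p a b) = 0"
    using assms(4) unfolding lin_dep_def by blast
  obtain p0 where p0: "p0 \<in> S" "t p0 \<noteq> 0" using tt by blast
  have perm: "\<forall>p\<in>S. snd p permutes {1..fst p}" using assms(2) by (simp add: is_kperm_def)
  have A: "card S \<noteq> 1"
  proof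
    assume "card S = 1"
    then obtain x where S: "S = {x}" by (rule card_1_singletonE)
    have "t p0 = 0"
      using same_order[OF assms(1), of "fst x" t p0] S perm assms(3) zero p0 by auto
    then show False using p0 by simp
  qed
  have B: "card S = 2 \<longrightarrow> (\<forall>p\<in>S. fst p = 2)"
  proof
    assume "card S = 2"
    then obtain x y where S: "S = {x, y}" and xy: "x \<noteq> y" by (auto simp: card_2_iff)
    have px: "snd x permutes {1..fst x}" and py: "snd y permutes {1..fst y}"
      and gx: "fst x > 1" and gy: "fst y > 1" using perm assms(3) S by auto
    consider "fst x = fst y" | "fst x < fst y" | "fst y < fst x" by linarith
    then show "\<forall>p\<in>S. fst p = 2"
    proof cases
      case 1
      show ?thesis
      proof (rule ccontr)
        assume "\<not> (\<forall>p\<in>S. fst p = 2)"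
        then have "fst x \<noteq> 2" using S 1 by auto
        then have "card S < fst x" using gx \<open>card S = 2\<close> by simp
        then have "t p0 = 0"
          using same_order[OF assms(1), of "fst x" t p0] S px py 1 zero p0 \<open>card S = 2\<close> by auto
        then show False using p0 by simp
      qed
    next
      case 2
      then have "t x = 0 \<and> t y = 0" using pair_diff[of x y t] px py gx zero S by auto
      then show ?thesis using p0 S by auto
    next
      case 3
      have z: "\<forall>a b. 0 < a \<and> a < 1 \<and> 0 < b \<and> b < 1 \<longrightarrow> (\<Sum>p\<in>{y,x}. t p * grad_poly p a b) = 0"
        using zero S by (simp add: insert_commute)
      have "t x = 0 \<and> t y = 0" using pair_diff[of y x t] px py gy z 3 by auto
      then show ?thesis using p0 S by auto
    qed
  qed
  have C: "card S = 3 \<and> (\<exists>k. \<forall>p\<in>S. fst p = k) \<longrightarrow> (\<forall>p\<in>S. fst p = 3)"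
  proof
    assume h: "card S = 3 \<and> (\<exists>k. \<forall>p\<in>S. fst p = k)"
    then obtain k where k: "\<forall>p\<in>S. fst p = k" by blast
    have k1: "k > 1" using k p0(1) assms(3) by metis
    have perm': "\<forall>p\<in>S. snd p permutes {1..k} \<and> fst p = k" using perm k by auto
    have "k \<noteq> 2"
    proof
      assume k2: "k = 2"
      have inj: "inj_on snd S"
      proof (rule inj_onI)
        fix x y assume "x \<in> S" "y \<in> S" "snd x = snd y"
        then show "x = y" using k by (metis prod_eqI)
      qed
      have sub: "snd ` S \<subseteq> {\<pi>. \<pi> permutes {1..k}}" using perm' by auto
      have fin: "finite {\<pi>. \<pi> permutes {1..k}}" by (rule finite_permutations) simp
      have "card S = card (snd ` S)" using card_image[OF inj] by simp
      also have "\<dots> \<le> card {\<pi>. \<pi> permutes {1..k}}" using card_mono[OF fin sub] .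
      also have "\<dots> = fact 2" using card_permutations[of "{1..k}" 2] k2 by simp
      finally show False using h by simp
    qed
    moreover have "\<not> k \<ge> 4"
    proof
      assume "k \<ge> 4"
      then have "t p0 = 0" using same_order[OF assms(1) perm', of t p0] h zero p0 by auto
      then show False using p0 by simp
    qed
    ultimately have "k = 3" using k1 by linarith
    then show "\<forall>p\<in>S. fst p = 3" using k by auto
  qed
  show ?thesis using A B C by blast
qed

end
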